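(* Let $V$ be an integral, unimodular, symmetric, positive definite $m\times m$ matrix. Then for every $x\in\mathbb{Z}^m$, $$|x|\le \lVert V^{-1}\rVert_1\,(x^TVx).$$
   Context: $|x|$ denotes the Euclidean norm of $x$. For a real $m\times m$ matrix $A=(a_{ij})$, $\lVert A\rVert_1=\max_j\sum_{i=1}^m|a_{ij}|$ is the operator norm with respect to the $\ell^1$-norm. Unimodular means determinant $\pm1$. *)

theory Defs
  imports "HOL-Analysis.Analysis"
begin

text \<open>Operator norm with respect to the l1-norm: maximum absolute column sum.\<close>
definition norm1_op :: "real^'n^'m \<Rightarrow> real" where
  "norm1_op A = Max (range (\<lambda>j. \<Sum>i\<in>UNIV. \<bar>A $ i $ j\<bar>))"

definition integral_matrix :: "real^'n^'m \<Rightarrow> bool" where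
  "integral_matrix A \<longleftrightarrow> (\<forall>i j. A $ i $ j \<in> \<int>)"

definition integral_vector :: "real^'n \<Rightarrow> bool" where
  "integral_vector x \<longleftrightarrow> (\<forall>i. x $ i \<in> \<int>)"

end

theory Submission
  imports Defs
begin

lemma quad_bound:
  fixes W :: "real^'m^'m" and x :: "real^'m"
  assumes sym: "transpose W = W" and c: "\<And>j. (\<Sum>i\<in>UNIV. \<bar>W $ i $ j\<bar>) \<le> c"
  shows "x \<bullet> (W *v x) \<le> c * (x \<bullet> x)"
proof -
  have sw: "W $ i $ j = W $ j $ i" for i j
  proof -
    have "transpose W $ i $ j = W $ j $ i" by (simp add: transpose_def)
    then show ?thesis using sym by simp
  qed
  have "x \<bullet> (W *v x) = (\<Sum>i\<in>UNIV. \<Sum>j\<in>UNIV. x$i * W$i$j * x$j)"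
    by (simp add: inner_vec_def matrix_vector_mult_def sum_distrib_left mult.assoc)
  also have "\<dots> \<le> (\<Sum>i\<in>UNIV. \<Sum>j\<in>UNIV. \<bar>W$i$j\<bar> * ((x$i)^2 + (x$j)^2) / 2)"
  proof (intro sum_mono)
    fix i j
    have a: "x$i * W$i$j * x$j \<le> \<bar>W$i$j\<bar> * \<bar>x$i * x$j\<bar>"
    proof -
      have "x$i * W$i$j * x$j = W$i$j * (x$i * x$j)" by simp
      also have "\<dots> \<le> \<bar>W$i$j * (x$i * x$j)\<bar>" by (rule abs_ge_self)
      finally show ?thesis by (simp add: abs_mult)
    qed
    have b: "\<bar>x$i * x$j\<bar> \<le> ((x$i)^2 + (x$j)^2) / 2"
    proof -
      have "0 \<le> (\<bar>x$i\<bar> - \<bar>x$j\<bar>)^2" by simp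
      then show ?thesis by (simp add: power2_eq_square abs_mult algebra_simps)
    qed
    show "x$i * W$i$j * x$j \<le> \<bar>W$i$j\<bar> * ((x$i)^2 + (x$j)^2) / 2"
      using a mult_left_mono[OF b, of "\<bar>W$i$j\<bar>"] by simp
  qed
  finally have s1: "x \<bullet> (W *v x) \<le> (\<Sum>i\<in>UNIV. \<Sum>j\<in>UNIV. \<bar>W$i$j\<bar> * ((x$i)^2 + (x$j)^2) / 2)" .
  have s2: "(\<Sum>i\<in>UNIV. \<Sum>j\<in>UNIV. \<bar>W$i$j\<bar> * ((x$i)^2 + (x$j)^2) / 2)
      = (\<Sum>i\<in>UNIV. \<Sum>j\<in>UNIV. \<bar>W$j$i\<bar> * (x$i)^2) / 2
                 + (\<Sum>i\<in>UNIV. \<Sum>j\<in>UNIV. \<bar>W$i$j\<bar> * (x$j)^2) / 2"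
    by (simp add: sw distrib_left sum.distrib add_divide_distrib sum_divide_distrib)
  have s3: "(\<Sum>i\<in>UNIV. \<Sum>j\<in>UNIV. \<bar>W$i$j\<bar> * (x$j)^2)
           = (\<Sum>j\<in>UNIV. \<Sum>i\<in>UNIV. \<bar>W$j$i\<bar> * (x$i)^2)"
    by simp
  have s4: "(\<Sum>i\<in>UNIV. \<Sum>j\<in>UNIV. \<bar>W$j$i\<bar> * (x$i)^2) \<le> (\<Sum>i\<in>UNIV. c * (x$i)^2)"
  proof (intro sum_mono)
    fix i
    have "(\<Sum>j\<in>UNIV. \<bar>W$j$i\<bar> * (x$i)^2) = (\<Sum>j\<in>UNIV. \<bar>W$j$i\<bar>) * (x$i)^2"
      by (simp add: sum_distrib_right)
    also have "\<dots> \<le> c * (x$i)^2" using c[of i] by (simp add: mult_right_mono)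
    finally show "(\<Sum>j\<in>UNIV. \<bar>W$j$i\<bar> * (x$i)^2) \<le> c * (x$i)^2" .
  qed
  have s5: "(\<Sum>j\<in>UNIV. \<Sum>i\<in>UNIV. \<bar>W$j$i\<bar> * (x$i)^2) = (\<Sum>i\<in>UNIV. \<Sum>j\<in>UNIV. \<bar>W$j$i\<bar> * (x$i)^2)"
    by (rule sum.swap)
  have "x \<bullet> (W *v x) \<le> (\<Sum>i\<in>UNIV. c * (x$i)^2)"
    using s1 s2 s3 s4 s5 by linarith
  also have "\<dots> = c * (x \<bullet> x)"
    by (simp add: inner_vec_def sum_distrib_left power2_eq_square)
  finally show ?thesis .
qed

theorem lemma6p6:
  fixes V :: "real^'m^'m" and x :: "real^'m"
  assumes "integral_matrix V"
    and "\<bar>det V\<bar> = 1"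
    and "transpose V = V"
    and "\<forall>y. y \<noteq> 0 \<longrightarrow> y \<bullet> (V *v y) > 0"
    and "integral_vector x"
  shows "norm x \<le> norm1_op (matrix_inv V) * (x \<bullet> (V *v x))"
proof -
  define W where "W = matrix_inv V"
  define c where "c = norm1_op W"
  have inv: "invertible V" using assms(2) invertible_det_nz by fastforce
  obtain A' where A': "V ** A' = mat 1" "A' ** V = mat 1" using inv unfolding invertible_def by blast
  have VWb: "V ** W = mat 1 \<and> W ** V = mat 1"
    unfolding W_def matrix_inv_def by (rule someI[of _ A']) (simp add: A')
  then have VW: "V ** W = mat 1" and WV: "W ** V = mat 1" by auto
  have "transpose W ** V = transpose (V ** W)" using assms(3) by (simp add: matrix_transpose_mul)
  then have tWV: "transpose W ** V = mat 1" using VW by simp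
  have "transpose W = transpose W ** (V ** W)" using VW by simp
  also have "\<dots> = (transpose W ** V) ** W" by (simp add: matrix_mul_assoc)
  also have "\<dots> = W" using tWV by simp
  finally have symW: "transpose W = W" .
  have cb: "\<And>j. (\<Sum>i\<in>UNIV. \<bar>W $ i $ j\<bar>) \<le> c"
    unfolding c_def norm1_op_def by (intro Max_ge) auto
  have Wx: "\<And>u. W *v (V *v u) = u" "\<And>u. V *v (W *v u) = u"
    by (simp_all add: matrix_vector_mul_assoc VW WV)
  have Wsym_inner: "a \<bullet> (W *v b) = b \<bullet> (W *v a)" for a b
  proof -
    have "a \<bullet> (W *v b) = (a v* W) \<bullet> b" by (simp add: dot_lmul_matrix)
    also have "a v* W = transpose W *v a" by simp
    finally show ?thesis using symW by (simp add: inner_commute)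
  qed
  have Vsym_inner: "a \<bullet> (V *v b) = b \<bullet> (V *v a)" for a b
  proof -
    have "a \<bullet> (V *v b) = (a v* V) \<bullet> b" by (simp add: dot_lmul_matrix)
    also have "a v* V = transpose V *v a" by simp
    finally show ?thesis using assms(3) by (simp add: inner_commute)
  qed
  have Wpos: "\<And>u. u \<bullet> (W *v u) \<ge> 0"
  proof -
    fix u
    define z where "z = W *v u"
    have uz: "u = V *v z" using Wx z_def by simp
    have e: "u \<bullet> (W *v u) = z \<bullet> (V *v z)" using uz z_def by (simp add: inner_commute)
    show "u \<bullet> (W *v u) \<ge> 0"
    proof (cases "z = 0")
      case True then show ?thesis using e by simp
    next
      case False then show ?thesis using e assms(4) by (simp add: less_imp_le)
    qed
  qed
  show ?thesis
  proof (cases "x = 0")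
    case True
    then show ?thesis by simp
  next
    case False
    define y where "y = V *v x"
    define q where "q = x \<bullet> y"
    define n2 where "n2 = x \<bullet> x"
    have qpos: "q > 0" using assms(4) False unfolding q_def y_def by blast
    have n2pos: "n2 > 0" using False unfolding n2_def by simp
    have Wy: "W *v y = x" using Wx y_def by simp
    have key: "\<And>t. 0 \<le> t^2 * q - 2 * t * n2 + x \<bullet> (W *v x)"
    proof -
      fix t :: real
      have "0 \<le> (t *\<^sub>R y - x) \<bullet> (W *v (t *\<^sub>R y - x))" by (rule Wpos)
      also have "\<dots> = t^2 * (y \<bullet> (W *v y)) - t * (y \<bullet> (W *v x)) - t * (x \<bullet> (W *v y)) + x \<bullet> (W *v x)"
        by (simp add: matrix_vector_mult_diff_distrib matrix_vector_mult_scaleR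
                      inner_diff_left inner_diff_right power2_eq_square algebra_simps)
      also have "\<dots> = t^2 * q - 2 * t * n2 + x \<bullet> (W *v x)"
        using Wsym_inner[of y x] Wy unfolding q_def n2_def by (simp add: inner_commute)
      finally show "0 \<le> t^2 * q - 2 * t * n2 + x \<bullet> (W *v x)" .
    qed
    have "0 \<le> (n2/q)^2 * q - 2 * (n2/q) * n2 + x \<bullet> (W *v x)" by (rule key)
    then have "n2^2 / q \<le> x \<bullet> (W *v x)" using qpos
      by (simp add: power2_eq_square field_simps)
    also have "\<dots> \<le> c * n2" unfolding n2_def by (rule quad_bound[OF symW cb])
    finally have "n2^2 \<le> c * n2 * q" using qpos by (simp add: field_simps)
    then have n2le: "n2 \<le> c * q" using n2pos by (simp add: power2_eq_square algebra_simps)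
    obtain i where xi: "x $ i \<noteq> 0" using False by (metis vec_eq_iff zero_index)
    have "x $ i \<in> \<int>" using assms(5) integral_vector_def by blast
    then obtain k where k: "x $ i = of_int k" by (auto elim: Ints_cases)
    then have "k \<noteq> 0" using xi by auto
    then have "\<bar>k\<bar> \<ge> 1" by linarith
    then have "\<bar>x $ i\<bar> \<ge> 1" using k
      by (metis of_int_1_le_iff of_int_abs)
    then have "1 * 1 \<le> \<bar>x$i\<bar> * \<bar>x$i\<bar>" by (intro mult_mono) auto
    then have "1 \<le> (x$i)^2" by (simp add: power2_eq_square)
    also have "(x$i)^2 \<le> n2" unfolding n2_def inner_vec_def
      using member_le_sum[of i UNIV "\<lambda>j. x$j * x$j"] by (simp add: power2_eq_square)
    finally have "1 \<le> n2" .
    then have "norm x \<le> n2"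
    proof -
      have "n2 \<le> n2 * n2" using \<open>1 \<le> n2\<close> by (simp add: mult_le_cancel_left1)
      then have "sqrt n2 \<le> sqrt (n2 * n2)" by (rule real_sqrt_le_mono)
      then show ?thesis using \<open>1 \<le> n2\<close> unfolding n2_def by (simp add: norm_eq_sqrt_inner)
    qed
    then show ?thesis using n2le unfolding c_def W_def q_def y_def by linarith
  qed
qed

end
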